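(* Let $\mathbb{M}=(M,+)$ be a commutative monoid with identity $0$ and let $A$ be an $\mathbb{M}$-RWTA over a graded alphabet $\Sigma$. Then there exists a sequential $\mathbb{M}$-RWTA $A'$ over $\Sigma$ such that $\mathbb{P}_A=\mathbb{P}_{A'}$, i.e. $\mathbb{P}_A(t)=\mathbb{P}_{A'}(t)$ for every tree $t\in T_\Sigma$.
   Context: A graded alphabet is a finite set $\Sigma=\bigcup_{k\in\mathbb{N}}\Sigma_k$, where $\Sigma_k$ is the set of symbols of arity $k$. The set $T_\Sigma$ of trees over $\Sigma$ is defined inductively: $f(t_1,\ldots,t_k)\in T_\Sigma$ whenever $f\in\Sigma_k$ and $t_1,\ldots,t_k\in T_\Sigma$. An $\mathbb{M}$-root-weighted tree automaton ($\mathbb{M}$-RWTA) is a tuple $A=(\Sigma,Q,\nu,\delta)$ where $Q$ is a finite set of states, $\nu:Q\to M$ is the root weight function, and $\delta\subseteq\bigcup_k Q\times\Sigma_k\times Q^k$ is the transition set. Write $\delta(f,q_1,\ldots,q_k)=\{q\mid (q,f,q_1,\ldots,q_k)\in\delta\}$, and for subsets $Q_1,\ldots,Q_k\subseteq Q$, $\delta(f,Q_1,\ldots,Q_k)=\bigcup_{(q_1,\ldots,q_k)\in Q_1\times\cdots\times Q_k}\delta(f,q_1,\ldots,q_k)$. For $S\subseteq Q$ put $\nu(S)=\sum_{s\in S}\nu(s)$ (so $\nu(\emptyset)=0$). Define $\Delta:T_\Sigma\to 2^Q$ by $\Delta(f(t_1,\ldots,t_k))=\delta(f,\Delta(t_1),\ldots,\Delta(t_k))$.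 The tree series realized by $A$ is the map $\mathbb{P}_A:T_\Sigma\to M$, $\mathbb{P}_A(t)=\nu(\Delta(t))$. The RWTA $A$ is sequential if $\mathrm{Card}(\Delta(t))\le 1$ for every $t\in T_\Sigma$. *)

theory Defs
  imports Main
begin

text \<open>Trees over a graded alphabet. A graded alphabet is a finite set of
  pairs (f, k) meaning that the symbol f belongs to the set of symbols of arity k.\<close>

datatype 'f tree = Node 'f "'f tree list"

type_synonym 'f graded_alphabet = "('f \<times> nat) set"

definition graded_alphabet :: "'f graded_alphabet \<Rightarrow> bool" where
  "graded_alphabet \<Sigma> \<longleftrightarrow> finite \<Sigma>"

inductive_set trees :: "'f graded_alphabet \<Rightarrow> 'f tree set" for \<Sigma> where
  "(f, length ts) \<in> \<Sigma> \<Longrightarrow> (\<forall>t\<in>set ts. t \<in> trees \<Sigma>) \<Longrightarrow> Node f ts \<in> trees \<Sigma>"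

text \<open>An M-RWTA (\<Sigma>, Q, \<nu>, \<delta>): Q finite state set, \<nu> the root weights (only its
  values on Q matter), \<delta> \<subseteq> \<Union>k. Q \<times> \<Sigma>_k \<times> Q^k, with a transition
  (q, f, [q1,...,qk]).\<close>

definition rwta :: "'f graded_alphabet \<Rightarrow> 's set \<Rightarrow> ('s \<Rightarrow> 'm) \<Rightarrow> ('s \<times> 'f \<times> 's list) set \<Rightarrow> bool" where
  "rwta \<Sigma> Q \<nu> \<delta> \<longleftrightarrow> graded_alphabet \<Sigma> \<and> finite Q \<and>
     (\<forall>(q, f, qs) \<in> \<delta>. q \<in> Q \<and> (f, length qs) \<in> \<Sigma> \<and> set qs \<subseteq> Q)"

definition delta_sets :: "('s \<times> 'f \<times> 's list) set \<Rightarrow> 'f \<Rightarrow> 's set list \<Rightarrow> 's set" where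
  "delta_sets \<delta> f Ss = {q. \<exists>qs. list_all2 (\<in>) qs Ss \<and> (q, f, qs) \<in> \<delta>}"

fun Delta :: "('s \<times> 'f \<times> 's list) set \<Rightarrow> 'f tree \<Rightarrow> 's set" where
  "Delta \<delta> (Node f ts) = delta_sets \<delta> f (map (Delta \<delta>) ts)"

definition series :: "('s \<Rightarrow> 'm::comm_monoid_add) \<Rightarrow> ('s \<times> 'f \<times> 's list) set \<Rightarrow> 'f tree \<Rightarrow> 'm" where
  "series \<nu> \<delta> t = sum \<nu> (Delta \<delta> t)"

definition sequential :: "'f graded_alphabet \<Rightarrow> ('s \<times> 'f \<times> 's list) set \<Rightarrow> bool" where
  "sequential \<Sigma> \<delta> \<longleftrightarrow> (\<forall>t \<in> trees \<Sigma>. card (Delta \<delta> t) \<le> 1)"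

end

theory Submission
  imports Defs
begin

lemma la2_single:
  "list_all2 (\<lambda>x S. x \<in> S) qs (map (\<lambda>t. {g t}) ts) \<longleftrightarrow> qs = map g ts"
  by (induction ts arbitrary: qs) (auto simp: list_all2_Cons2)

lemma Delta_sub:
  assumes "rwta \<Sigma> Q \<nu> \<delta>" shows "Delta \<delta> t \<subseteq> Q"
proof (cases t)
  case (Node f ts)
  then show ?thesis using assms by (auto simp: rwta_def delta_sets_def)
qed

theorem theorem1:
  fixes \<Sigma> :: "'f graded_alphabet"
    and Q :: "'s set" and \<nu> :: "'s \<Rightarrow> 'm::comm_monoid_add"
    and \<delta> :: "('s \<times> 'f \<times> 's list) set"
  assumes "rwta \<Sigma> Q \<nu> \<delta>"
  shows "\<exists>(Q' :: nat set) (\<nu>' :: nat \<Rightarrow> 'm) (\<delta>' :: (nat \<times> 'f \<times> nat list) set).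
           rwta \<Sigma> Q' \<nu>' \<delta>' \<and> sequential \<Sigma> \<delta>' \<and>
           (\<forall>t \<in> trees \<Sigma>. series \<nu> \<delta> t = series \<nu>' \<delta>' t)"
proof -
  have fQ: "finite Q" and gS: "graded_alphabet \<Sigma>" using assms by (auto simp: rwta_def)
  then have "finite (Pow Q)" by simp
  then obtain e :: "'s set \<Rightarrow> nat" where inj: "inj_on e (Pow Q)"
    using finite_imp_inj_to_nat_seg by blast
  define \<delta>' where "\<delta>' = {(e (delta_sets \<delta> f Ss), f, map e Ss) | f Ss.
      (f, length Ss) \<in> \<Sigma> \<and> set Ss \<subseteq> Pow Q}"
  define \<nu>' where "\<nu>' = (\<lambda>n. sum \<nu> (the_inv_into (Pow Q) e n))"
  define Q' where "Q' = e ` Pow Q"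
  have dsub: "delta_sets \<delta> f Ss \<subseteq> Q" for f Ss
    using assms by (auto simp: rwta_def delta_sets_def)
  have key: "Delta \<delta>' t = {e (Delta \<delta> t)}" if "t \<in> trees \<Sigma>" for t
    using that
  proof (induction t rule: trees.induct)
    case (1 f ts)
    have m: "map (Delta \<delta>') ts = map (\<lambda>t. {e (Delta \<delta> t)}) ts"
      using 1(2) by auto
    have sub: "set (map (Delta \<delta>) ts) \<subseteq> Pow Q" using Delta_sub[OF assms] by auto
    show ?case
    proof (rule set_eqI, rule iffI)
      fix q assume "q \<in> Delta \<delta>' (Node f ts)"
      then obtain qs where qs: "qs = map (\<lambda>t. e (Delta \<delta> t)) ts" "(q, f, qs) \<in> \<delta>'"
        by (auto simp: delta_sets_def m la2_single)
      then obtain Ss where S: "q = e (delta_sets \<delta> f Ss)" "map e Ss = qs" "set Ss \<subseteq> Pow Q"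
        by (auto simp: \<delta>'_def)
      have "map e Ss = map e (map (Delta \<delta>) ts)" using S qs by simp
      then have "Ss = map (Delta \<delta>) ts"
        by (rule map_inj_on) (use S sub in \<open>auto intro: inj_on_subset[OF inj]\<close>)
      then show "q \<in> {e (Delta \<delta> (Node f ts))}" using S by simp
    next
      fix q assume "q \<in> {e (Delta \<delta> (Node f ts))}"
      then have "(q, f, map (\<lambda>t. e (Delta \<delta> t)) ts) \<in> \<delta>'"
        unfolding \<delta>'_def using 1(1) sub
        by (auto intro!: exI[of _ "map (Delta \<delta>) ts"] dest!: subsetD[OF Delta_sub[OF assms]])
      then show "q \<in> Delta \<delta>' (Node f ts)"
        by (auto simp: delta_sets_def m la2_single)
    qed
  qed
  have "rwta \<Sigma> Q' \<nu>' \<delta>'"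
    unfolding rwta_def Q'_def \<delta>'_def using fQ gS dsub by (auto 0 4)
  moreover have "sequential \<Sigma> \<delta>'" unfolding sequential_def using key by simp
  moreover have "\<forall>t \<in> trees \<Sigma>. series \<nu> \<delta> t = series \<nu>' \<delta>' t"
  proof
    fix t assume t: "t \<in> trees \<Sigma>"
    have "Delta \<delta> t \<in> Pow Q" using Delta_sub[OF assms] by auto
    then show "series \<nu> \<delta> t = series \<nu>' \<delta>' t"
      unfolding series_def key[OF t] \<nu>'_def using the_inv_into_f_f[OF inj] by simp
  qed
  ultimately show ?thesis by blast
qed

end
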